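(* Let $\mathcal M=(f,aN)$ be a tight polymatroid, where $a\notin N$, and let $\alpha_1,\alpha_2\ge0$ with $\alpha_1+\alpha_2=f(a)$. Let $\mathcal N=(g,a_1a_2N)$ be the polymatroid that splits $a$ in $\mathcal M$ with parameters $\alpha_1,\alpha_2$, i.e. for all $A\subseteq N$: $g(A)=f(A)$, $g(a_1a_2A)=f(aA)$, and $g(a_iA)=\min\{f(A)+\alpha_i,\,f(aA)\}$ for $i=1,2$. Then the dual $\mathcal N^\perp=(g^\perp,a_1a_2N)$ splits $a$ in $\mathcal M^\perp=(f^\perp,aN)$ with the same parameters: for all $A\subseteq N$, $g^\perp(A)=f^\perp(A)$, $g^\perp(a_1a_2A)=f^\perp(aA)$, and $g^\perp(a_iA)=\min\{f^\perp(A)+\alpha_i,\,f^\perp(aA)\}$ for $i=1,2$; moreover $f^\perp(a)=f(a)=\alpha_1+\alpha_2$.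
   Context: A polymatroid $(f,M)$ consists of a finite set $M$ and a function $f$ on subsets of $M$ with $f(\emptyset)=0$ that is non-negative, monotone and submodular. It is tight if $f(M)=f(M\setminus\{i\})$ for all $i\in M$. The dual of $(f,M)$ is $(f^\perp,M)$ with $f^\perp(A)=f(M\setminus A)+\sum_{i\in A}f(i)-f(M)$. Juxtaposition denotes union, e.g. $aN=\{a\}\cup N$. *)

theory Defs
  imports Complex_Main
begin

definition polymatroid :: "('a set \<Rightarrow> real) \<Rightarrow> 'a set \<Rightarrow> bool" where
  "polymatroid f M \<longleftrightarrow> finite M \<and> f {} = 0
     \<and> (\<forall>A. A \<subseteq> M \<longrightarrow> f A \<ge> 0)
     \<and> (\<forall>A B. A \<subseteq> B \<and> B \<subseteq> M \<longrightarrow> f A \<le> f B)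
     \<and> (\<forall>A B. A \<subseteq> M \<and> B \<subseteq> M \<longrightarrow> f (A \<union> B) + f (A \<inter> B) \<le> f A + f B)"

definition tight :: "('a set \<Rightarrow> real) \<Rightarrow> 'a set \<Rightarrow> bool" where
  "tight f M \<longleftrightarrow> (\<forall>i\<in>M. f M = f (M - {i}))"

definition pm_dual :: "('a set \<Rightarrow> real) \<Rightarrow> 'a set \<Rightarrow> 'a set \<Rightarrow> real" where
  "pm_dual f M A = f (M - A) + (\<Sum>i\<in>A. f {i}) - f M"

end

theory Submission
  imports Defs
begin

theorem lemma2p11:
  fixes f g :: "'a set \<Rightarrow> real" and a a1 a2 :: 'a and N :: "'a set"
    and \<alpha>1 \<alpha>2 :: real
  assumes "a \<notin> N" and "a1 \<notin> N" and "a2 \<notin> N" and "a1 \<noteq> a2"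
    and "polymatroid f (insert a N)" and "tight f (insert a N)"
    and "\<alpha>1 \<ge> 0" and "\<alpha>2 \<ge> 0" and "\<alpha>1 + \<alpha>2 = f {a}"
    and "polymatroid g (insert a1 (insert a2 N))"
    and "\<And>A. A \<subseteq> N \<Longrightarrow> g A = f A"
    and "\<And>A. A \<subseteq> N \<Longrightarrow> g (insert a1 (insert a2 A)) = f (insert a A)"
    and "\<And>A. A \<subseteq> N \<Longrightarrow> g (insert a1 A) = min (f A + \<alpha>1) (f (insert a A))"
    and "\<And>A. A \<subseteq> N \<Longrightarrow> g (insert a2 A) = min (f A + \<alpha>2) (f (insert a A))"
  shows "(\<forall>A. A \<subseteq> N \<longrightarrow>
            pm_dual g (insert a1 (insert a2 N)) A = pm_dual f (insert a N) A
          \<and> pm_dual g (insert a1 (insert a2 N)) (insert a1 (insert a2 A))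
              = pm_dual f (insert a N) (insert a A)
          \<and> pm_dual g (insert a1 (insert a2 N)) (insert a1 A)
              = min (pm_dual f (insert a N) A + \<alpha>1) (pm_dual f (insert a N) (insert a A))
          \<and> pm_dual g (insert a1 (insert a2 N)) (insert a2 A)
              = min (pm_dual f (insert a N) A + \<alpha>2) (pm_dual f (insert a N) (insert a A)))
       \<and> pm_dual f (insert a N) {a} = f {a} \<and> f {a} = \<alpha>1 + \<alpha>2"
proof -
  have finN: "finite N" using assms(5) unfolding polymatroid_def by simp
  have f0: "f {} = 0" using assms(5) unfolding polymatroid_def by simp
  have ga1: "g {a1} = \<alpha>1" using assms(13)[of "{}"] f0 assms(7,8,9) by simp
  have ga2: "g {a2} = \<alpha>2" using assms(14)[of "{}"] f0 assms(7,8,9) by simp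
  have gM: "g (insert a1 (insert a2 N)) = f (insert a N)" using assms(12) by simp
  have tN: "f (insert a N) = f N" using assms(6,1) unfolding tight_def by auto
  have S: "(\<Sum>i\<in>A. g {i}) = (\<Sum>i\<in>A. f {i})" if "A \<subseteq> N" for A
    by (rule sum.cong) (use that assms(11) in auto)
  have main: "\<forall>A. A \<subseteq> N \<longrightarrow>
            pm_dual g (insert a1 (insert a2 N)) A = pm_dual f (insert a N) A
          \<and> pm_dual g (insert a1 (insert a2 N)) (insert a1 (insert a2 A))
              = pm_dual f (insert a N) (insert a A)
          \<and> pm_dual g (insert a1 (insert a2 N)) (insert a1 A)
              = min (pm_dual f (insert a N) A + \<alpha>1) (pm_dual f (insert a N) (insert a A))
          \<and> pm_dual g (insert a1 (insert a2 N)) (insert a2 A)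
              = min (pm_dual f (insert a N) A + \<alpha>2) (pm_dual f (insert a N) (insert a A))"
  proof (intro allI impI)
    fix A assume A: "A \<subseteq> N"
    have finA: "finite A" using A finN finite_subset by blast
    have nA: "a \<notin> A" "a1 \<notin> A" "a2 \<notin> A" using A assms(1,2,3) by auto
    have sub: "N - A \<subseteq> N" by auto
    have d1: "insert a1 (insert a2 N) - A = insert a1 (insert a2 (N - A))" using nA by auto
    have d2: "insert a1 (insert a2 N) - insert a1 (insert a2 A) = N - A" using assms(2,3) by auto
    have d3: "insert a1 (insert a2 N) - insert a1 A = insert a2 (N - A)" using assms(2,4) nA by auto
    have d4: "insert a1 (insert a2 N) - insert a2 A = insert a1 (N - A)" using assms(3,4) nA by auto
    have e1: "insert a N - A = insert a (N - A)" using nA by auto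
    have e2: "insert a N - insert a A = N - A" using assms(1) by auto
    have s1: "(\<Sum>i\<in>insert a1 (insert a2 A). g {i}) = \<alpha>1 + \<alpha>2 + (\<Sum>i\<in>A. f {i})"
      using finA nA assms(4) ga1 ga2 S[OF A] by simp
    have s2: "(\<Sum>i\<in>insert a1 A. g {i}) = \<alpha>1 + (\<Sum>i\<in>A. f {i})"
      using finA nA ga1 S[OF A] by simp
    have s3: "(\<Sum>i\<in>insert a2 A. g {i}) = \<alpha>2 + (\<Sum>i\<in>A. f {i})"
      using finA nA ga2 S[OF A] by simp
    have s4: "(\<Sum>i\<in>insert a A. f {i}) = f {a} + (\<Sum>i\<in>A. f {i})"
      using finA nA by simp
    show "pm_dual g (insert a1 (insert a2 N)) A = pm_dual f (insert a N) A
          \<and> pm_dual g (insert a1 (insert a2 N)) (insert a1 (insert a2 A))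
              = pm_dual f (insert a N) (insert a A)
          \<and> pm_dual g (insert a1 (insert a2 N)) (insert a1 A)
              = min (pm_dual f (insert a N) A + \<alpha>1) (pm_dual f (insert a N) (insert a A))
          \<and> pm_dual g (insert a1 (insert a2 N)) (insert a2 A)
              = min (pm_dual f (insert a N) A + \<alpha>2) (pm_dual f (insert a N) (insert a A))"
      unfolding pm_dual_def d1 d2 d3 d4 e1 e2 s1 s2 s3 s4 gM
      using assms(9) assms(11)[OF sub] assms(12)[OF sub] assms(13)[OF sub] assms(14)[OF sub] S[OF A]
      by (auto simp: min_def)
  qed
  have "pm_dual f (insert a N) {a} = f {a}"
    unfolding pm_dual_def using assms(1) tN by simp
  with main assms(9) show ?thesis by simp
qed

end
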